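(* Let $V_1$ and $V_2$ be real vector spaces of dimensions $d_1,d_2\geq 1$, let $U\subseteq V_1$ and $V\subseteq V_2$ be relatively compact, open, balanced subsets, let $R_1,R_2>0$ and $0<\varepsilon<R_1^{d_1}R_2^{d_2}$, and define $$U\times_{R_1,R_2,\varepsilon}V:=\{(\alpha u,\beta v)\,;\,u\in U,\ v\in V,\ \alpha,\beta\in\mathbb{R},\ |\alpha|\leq R_1,\ |\beta|\leq R_2,\ |\alpha^{d_1}\beta^{d_2}|\leq\varepsilon\}\subseteq V_1\times V_2.$$ Then $$\Lambda(U\times_{R_1,R_2,\varepsilon}V)=\varepsilon\Big(1+\log\Big(\frac{R_1^{d_1}R_2^{d_2}}{\varepsilon}\Big)\Big)\Lambda(U)\Lambda(V),$$ where $\Lambda$ denotes Lebesgue measure on $V_1$, $V_2$, and the product Lebesgue measure on $V_1\times V_2$.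
   Context: A subset $U$ of a real vector space is balanced if $\alpha U\subseteq U$ for all real $\alpha$ with $|\alpha|\leq 1$. *)

theory Defs
  imports "HOL-Analysis.Analysis"
begin

definition balanced :: "'a::real_vector set \<Rightarrow> bool" where
  "balanced U \<longleftrightarrow> (\<forall>\<alpha>::real. \<bar>\<alpha>\<bar> \<le> 1 \<longrightarrow> (\<lambda>x. \<alpha> *\<^sub>R x) ` U \<subseteq> U)"

definition twisted_prod ::
  "'a::euclidean_space set \<Rightarrow> real \<Rightarrow> real \<Rightarrow> real \<Rightarrow> 'b::euclidean_space set \<Rightarrow> ('a \<times> 'b) set" where
  "twisted_prod U R1 R2 \<epsilon> V =
     {(\<alpha> *\<^sub>R u, \<beta> *\<^sub>R v) | u v \<alpha> \<beta>. u \<in> U \<and> v \<in> V \<and> \<bar>\<alpha>\<bar> \<le> R1 \<and> \<bar>\<beta>\<bar> \<le> R2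
        \<and> \<bar>\<alpha> ^ DIM('a) * \<beta> ^ DIM('b)\<bar> \<le> \<epsilon>}"

end

theory Submission
  imports Defs
begin

definition mink :: "'a::real_normed_vector set \<Rightarrow> 'a \<Rightarrow> real" where
  "mink U x = Inf {a. 0 < a \<and> x \<in> (\<lambda>y. a *\<^sub>R y) ` U}"

lemma balanced_scale:
  assumes "balanced U" "u \<in> U" "\<bar>c\<bar> \<le> 1" shows "c *\<^sub>R u \<in> U"
  using assms unfolding balanced_def by blast

lemma balanced_zero:
  assumes "balanced U" "U \<noteq> {}" shows "0 \<in> U"
proof -
  obtain u where "u \<in> U" using assms by auto
  from balanced_scale[OF assms(1) this, of 0] show ?thesis by simp
qed

lemma mink_set_ne:
  fixes U :: "'a::real_normed_vector set"
  assumes "open U" "balanced U" "U \<noteq> {}"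
  shows "{a. 0 < a \<and> x \<in> (\<lambda>y. a *\<^sub>R y) ` U} \<noteq> {}"
proof -
  have "0 \<in> U" using balanced_zero assms by blast
  then obtain e where e: "e > 0" "ball 0 e \<subseteq> U" using assms(1) open_contains_ball by blast
  show ?thesis
  proof (cases "x = 0")
    case True
    then have "1 \<in> {a. 0 < a \<and> x \<in> (\<lambda>y. a *\<^sub>R y) ` U}" using \<open>0 \<in> U\<close> by auto
    then show ?thesis by blast
  next
    case False
    define a where "a = 2 * norm x / e"
    have a: "a > 0" using False e by (simp add: a_def)
    have "norm ((1/a) *\<^sub>R x) = e / 2" using False e by (simp add: a_def)
    then have "(1/a) *\<^sub>R x \<in> U" using e by auto
    moreover have "x = a *\<^sub>R ((1/a) *\<^sub>R x)" using a by simp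
    ultimately have "a \<in> {a. 0 < a \<and> x \<in> (\<lambda>y. a *\<^sub>R y) ` U}" using a by blast
    then show ?thesis by blast
  qed
qed

lemma mink_nonneg:
  assumes "open U" "balanced U" "U \<noteq> {}"
  shows "mink U x \<ge> 0"
  unfolding mink_def
  by (rule cInf_greatest[OF mink_set_ne[OF assms]]) auto

lemma mink_less:
  fixes U :: "'a::real_normed_vector set"
  assumes "open U" "balanced U" "U \<noteq> {}" "a > 0"
  shows "mink U x < a \<longleftrightarrow> x \<in> (\<lambda>y. a *\<^sub>R y) ` U"
proof -
  let ?S = "{a. 0 < a \<and> x \<in> (\<lambda>y. a *\<^sub>R y) ` U}"
  have ne: "?S \<noteq> {}" by (rule mink_set_ne[OF assms(1-3)])
  have bdd: "bdd_below ?S" by (rule bdd_belowI[of _ 0]) auto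
  show ?thesis
  proof
    assume "mink U x < a"
    then obtain b where b: "b \<in> ?S" "b < a" unfolding mink_def using cInf_less_iff[OF ne bdd] by blast
    then obtain u where u: "u \<in> U" "x = b *\<^sub>R u" by auto
    have "(b / a) *\<^sub>R u \<in> U" using b assms(4) by (intro balanced_scale[OF assms(2) u(1)]) auto
    moreover have "x = a *\<^sub>R ((b / a) *\<^sub>R u)" using u assms(4) by simp
    ultimately show "x \<in> (\<lambda>y. a *\<^sub>R y) ` U" by blast
  next
    assume "x \<in> (\<lambda>y. a *\<^sub>R y) ` U"
    then obtain u where u: "u \<in> U" "x = a *\<^sub>R u" by auto
    obtain e where e: "e > 0" "ball u e \<subseteq> U" using assms(1) u(1) open_contains_ball by blast
    define t where "t = 1 + e / (2 * (norm u + 1))"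
    have "e / (2 * (norm u + 1)) > 0" using e by (smt (verit) divide_pos_pos norm_ge_zero)
    then have t: "t > 1" by (simp add: t_def)
    have "dist u (t *\<^sub>R u) = norm ((1 - t) *\<^sub>R u)" by (simp add: dist_norm algebra_simps)
    also have "\<dots> = (t - 1) * norm u" using t by simp
    also have "\<dots> = e * norm u / (2 * (norm u + 1))" by (simp add: t_def)
    also have "\<dots> < e"
    proof -
      have n: "0 \<le> norm u" by simp
      have "norm u / (2 * (norm u + 1)) < 1" using n by (simp add: divide_less_eq) (smt (verit) norm_ge_zero)
      then have "e * (norm u / (2 * (norm u + 1))) < e * 1" using e by (intro mult_strict_left_mono) auto
      then show ?thesis by simp
    qed
    finally have "t *\<^sub>R u \<in> U" using e by auto
    moreover have "x = (a / t) *\<^sub>R (t *\<^sub>R u)" using u t by simp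
    ultimately have "x \<in> (\<lambda>y. (a / t) *\<^sub>R y) ` U" by (rule rev_image_eqI)
    then have "a / t \<in> ?S" using t assms(4) by auto
    then have "mink U x \<le> a / t" unfolding mink_def by (rule cInf_lower[OF _ bdd])
    also have "a / t < a" using t assms(4) by (simp add: divide_less_eq)
    finally show "mink U x < a" .
  qed
qed

lemma mink_zero:
  assumes "open U" "balanced U" "U \<noteq> {}"
  shows "mink U 0 = 0"
proof -
  have "\<And>a. a > 0 \<Longrightarrow> mink U 0 < a"
    using mink_less[OF assms] balanced_zero[OF assms(2,3)] by (metis image_eqI scaleR_zero_right)
  then show ?thesis using mink_nonneg[OF assms, of 0]
    by (metis less_eq_real_def linorder_not_less)
qed

lemma mink_measurable:
  fixes U :: "'a::euclidean_space set"
  assumes "open U" "balanced U" "U \<noteq> {}"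
  shows "mink U \<in> borel_measurable borel"
proof (rule borel_measurableI_less)
  fix y :: real
  show "{x \<in> space borel. mink U x < y} \<in> sets borel"
  proof (cases "y > 0")
    case True
    then have "{x \<in> space borel. mink U x < y} = (\<lambda>v. y *\<^sub>R v) ` U"
      using mink_less[OF assms True] by auto
    moreover have "open ((\<lambda>v. y *\<^sub>R v) ` U)" using True assms(1) open_scaling by auto
    ultimately show ?thesis by auto
  next
    case False
    then have "{x \<in> space borel. mink U x < y} = {}"
      using mink_nonneg[OF assms] by (auto simp: not_less) (meson le_less_trans not_le)
    then show ?thesis by simp
  qed
qed

lemma emeasure_scale:
  fixes S :: "'a::euclidean_space set"
  assumes "c \<noteq> 0" "S \<in> sets borel"
  shows "emeasure lborel ((\<lambda>x. c *\<^sub>R x) ` S) = ennreal (\<bar>c\<bar> ^ DIM('a)) * emeasure lborel S"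
proof -
  let ?f = "\<lambda>x::'a. c *\<^sub>R x"
  have img: "?f ` S = (\<lambda>x. (1/c) *\<^sub>R x) -` S"
  proof (intro set_eqI iffI)
    fix x assume "x \<in> ?f ` S"
    then obtain s where "s \<in> S" "x = c *\<^sub>R s" by auto
    then show "x \<in> (\<lambda>x. (1/c) *\<^sub>R x) -` S" using assms(1) by simp
  next
    fix x assume "x \<in> (\<lambda>x. (1/c) *\<^sub>R x) -` S"
    then have "(1/c) *\<^sub>R x \<in> S" by simp
    moreover have "x = c *\<^sub>R ((1/c) *\<^sub>R x)" using assms(1) by simp
    ultimately show "x \<in> ?f ` S" by (rule rev_image_eqI)
  qed
  have fm: "(\<lambda>x::'a. (1/c) *\<^sub>R x) \<in> borel_measurable borel" by measurable
  have meas: "?f ` S \<in> sets borel"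
    using measurable_sets[OF fm assms(2)] unfolding img by simp
  have pre: "?f -` ?f ` S = S" using assms(1) by auto
  have "emeasure lborel (?f ` S) = emeasure (density (distr lborel borel (\<lambda>x. 0 + c *\<^sub>R x)) (\<lambda>_. ennreal (\<bar>c\<bar> ^ DIM('a)))) (?f ` S)"
    using lborel_affine[OF assms(1), of "0::'a"] by simp
  also have "\<dots> = ennreal (\<bar>c\<bar> ^ DIM('a)) * emeasure (distr lborel borel ?f) (?f ` S)"
    using meas by (simp add: emeasure_density nn_integral_cmult_indicator)
  also have "\<dots> = ennreal (\<bar>c\<bar> ^ DIM('a)) * emeasure lborel S"
    using meas pre by (simp add: emeasure_distr)
  finally show ?thesis .
qed


lemma distr_lemma:
  fixes q :: "'a::euclidean_space \<Rightarrow> real" and f :: "real \<Rightarrow> ennreal"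
  assumes qm[measurable]: "q \<in> borel_measurable borel" and q0: "\<And>x. 0 \<le> q x"
    and qs: "\<And>s. s > 0 \<Longrightarrow> emeasure lborel {x. q x < s} = ennreal (s * c)" and c: "0 \<le> c"
    and fm[measurable]: "f \<in> borel_measurable borel"
  shows "(\<integral>\<^sup>+x. f (q x) \<partial>lborel) = ennreal c * (\<integral>\<^sup>+s. indicator {0<..} s * f s \<partial>lborel)"
proof -
  let ?M = "distr lborel borel (\<lambda>x. - q x)"
  let ?N = "density lborel (\<lambda>u. ennreal c * indicator {..<0} u)"
  have e1: "emeasure ?M {s<..} = emeasure lborel {x. q x < -s}" for s :: real
  proof -
    have "(\<lambda>x. - q x) -` {s<..} \<inter> space lborel = {x. q x < -s}" by auto
    then show ?thesis by (subst emeasure_distr) auto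
  qed
  have e2: "emeasure ?N {s<..} = ennreal c * emeasure lborel {s<..<0}" for s :: real
  proof -
    have ind: "(\<lambda>x. ennreal c * indicator {..<0} x * indicator {s<..} x) = (\<lambda>x. ennreal c * indicator {s<..<0} x)"
      by (auto simp: indicator_def fun_eq_iff)
    have "emeasure ?N {s<..} = (\<integral>\<^sup>+x. ennreal c * indicator {..<0} x * indicator {s<..} x \<partial>lborel)"
      by (rule emeasure_density; measurable)
    also have "\<dots> = (\<integral>\<^sup>+x. ennreal c * indicator {s<..<0} x \<partial>lborel)" by (simp add: ind)
    also have "\<dots> = ennreal c * emeasure lborel {s<..<0}"
      by (rule nn_integral_cmult_indicator) auto
    finally show ?thesis .
  qed
  have e3: "emeasure ?M {s<..} = (if s < 0 then ennreal (- s * c) else 0)" for s :: real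
  proof (cases "s < 0")
    case True
    then show ?thesis using e1 qs[of "-s"] by simp
  next
    case False
    then have "{x. q x < -s} = {}" using q0 by (auto simp: not_less) (meson le_less_trans linorder_not_le neg_le_0_iff_le q0)
    then show ?thesis using e1 False by simp
  qed
  have MN: "?M = ?N"
  proof (rule measure_eqI_lessThan)
    show "sets ?M = sets borel" by simp
    show "sets ?N = sets borel" by simp
    fix s :: real
    show "emeasure ?M {s<..} < \<infinity>" using e3[of s] by simp
    show "emeasure ?M {s<..} = emeasure ?N {s<..}"
    proof (cases "s < 0")
      case True
      then show ?thesis using e3[of s] e2[of s] c ennreal_mult[of c "-s"] by (simp add: mult.commute)
    next
      case False
      then show ?thesis using e3[of s] e2[of s] by simp
    qed
  qed
  have "(\<integral>\<^sup>+x. f (q x) \<partial>lborel) = (\<integral>\<^sup>+x. (\<lambda>u. f (- u)) (- q x) \<partial>lborel)" by simp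
  also have "\<dots> = (\<integral>\<^sup>+u. f (- u) \<partial>?M)"
    by (rule nn_integral_distr[symmetric]) auto
  also have "\<dots> = (\<integral>\<^sup>+u. f (- u) \<partial>?N)" using MN by simp
  also have "\<dots> = (\<integral>\<^sup>+u. ennreal c * indicator {..<0} u * f (- u) \<partial>lborel)"
    by (subst nn_integral_density) auto
  also have "\<dots> = (\<integral>\<^sup>+s. ennreal c * indicator {..<0} (0 + (-1) * s) * f (- (0 + (-1) * s)) \<partial>lborel)"
    by (subst nn_integral_real_affine[where c="-1" and t=0]) auto
  also have "\<dots> = (\<integral>\<^sup>+s. ennreal c * (indicator {0<..} s * f s) \<partial>lborel)"
    by (intro nn_integral_cong) (auto simp: indicator_def)
  also have "\<dots> = ennreal c * (\<integral>\<^sup>+s. indicator {0<..} s * f s \<partial>lborel)"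
    by (rule nn_integral_cmult) auto
  finally show ?thesis .
qed


definition Phi :: "real \<Rightarrow> real \<Rightarrow> real \<Rightarrow> real \<Rightarrow> real" where
  "Phi A B \<epsilon> s = (if s < A then (if s * B \<le> \<epsilon> then B else \<epsilon> / s) else 0)"

lemma inner_calc:
  fixes A B \<epsilon> s :: real
  assumes "A > 0" "B > 0" "\<epsilon> > 0"
  shows "emeasure lborel {t. 0 < t \<and> s < A \<and> t < B \<and> s * t < \<epsilon>} = ennreal (Phi A B \<epsilon> s)"
proof -
  have "{t. 0 < t \<and> s < A \<and> t < B \<and> s * t < \<epsilon>} = {0<..<Phi A B \<epsilon> s}"
  proof (cases "s < A")
    case sA: True
    show ?thesis
    proof (cases "s * B \<le> \<epsilon>")
      case True
      have P: "Phi A B \<epsilon> s = B" using sA True by (simp add: Phi_def)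
      have "s * t < \<epsilon>" if "0 < t" "t < B" for t
      proof (cases "s > 0")
        case True
        then have "s * t < s * B" using that by simp
        then show ?thesis using \<open>s * B \<le> \<epsilon>\<close> by linarith
      next
        case False
        then have "s * t \<le> 0" using that by (simp add: mult_nonpos_nonneg)
        then show ?thesis using assms by linarith
      qed
      then show ?thesis unfolding P using sA by (auto simp: greaterThanLessThan_def greaterThan_def lessThan_def)
    next
      case False
      have P: "Phi A B \<epsilon> s = \<epsilon> / s" using sA False by (simp add: Phi_def)
      have s0: "s > 0"
      proof (rule ccontr)
        assume "\<not> s > 0"
        then have "s * B \<le> 0" using assms by (simp add: mult_nonpos_nonneg)
        then show False using False assms by linarith
      qed
      have eB: "\<epsilon> / s < B" using False s0 by (simp add: divide_less_eq mult.commute)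
      have iff: "s * t < \<epsilon> \<longleftrightarrow> t < \<epsilon> / s" for t using s0 by (simp add: less_divide_eq mult.commute)
      show ?thesis unfolding P
      proof (intro set_eqI iffI)
        fix t assume "t \<in> {t. 0 < t \<and> s < A \<and> t < B \<and> s * t < \<epsilon>}"
        then show "t \<in> {0<..<\<epsilon> / s}" using iff by auto
      next
        fix t assume "t \<in> {0<..<\<epsilon> / s}"
        then show "t \<in> {t. 0 < t \<and> s < A \<and> t < B \<and> s * t < \<epsilon>}" using iff sA eB by auto
      qed
    qed
  next
    case False
    then have P: "Phi A B \<epsilon> s = 0" by (simp add: Phi_def)
    show ?thesis unfolding P using False by simp
  qed
  moreover have "emeasure lborel {0<..<x} = ennreal x" for x :: real
    by (cases "x \<ge> 0") (auto simp: ennreal_neg)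
  ultimately show ?thesis by simp
qed

lemma outer_calc:
  fixes A B \<epsilon> :: real
  assumes A: "A > 0" and B: "B > 0" and e: "\<epsilon> > 0" and eAB: "\<epsilon> < A * B"
  shows "(\<integral>\<^sup>+s. indicator {0<..} s * ennreal (Phi A B \<epsilon> s) \<partial>lborel) = ennreal (\<epsilon> * (1 + ln (A * B / \<epsilon>)))"
proof -
  define s0 where "s0 = \<epsilon> / B"
  have s0: "0 < s0" "s0 < A" using A B e eAB by (auto simp: s0_def divide_less_eq mult.commute)
  have Bs0: "B * s0 = \<epsilon>" using B by (simp add: s0_def)
  have split: "indicator {0<..} s * ennreal (Phi A B \<epsilon> s) =
      ennreal B * indicator {0<..s0} s + ennreal (\<epsilon> / s) * indicator {s0<..<A} s" for s
  proof -
    consider "s \<le> 0" | "0 < s" "s \<le> s0" | "s0 < s" "s < A" | "A \<le> s" by linarith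
    then show ?thesis
    proof cases
      case 1 then show ?thesis using s0 by (auto simp: indicator_def)
    next
      case 2
      then have "s * B \<le> \<epsilon>" using B Bs0 by (metis mult.commute mult_right_mono less_imp_le)
      then show ?thesis using 2 s0 by (auto simp: indicator_def Phi_def)
    next
      case 3
      then have "\<not> s * B \<le> \<epsilon>" using B Bs0 by (metis mult.commute mult_strict_left_mono not_le)
      then show ?thesis using 3 s0 by (auto simp: indicator_def Phi_def)
    next
      case 4 then show ?thesis using s0 by (auto simp: indicator_def Phi_def)
    qed
  qed
  have "(\<integral>\<^sup>+s. indicator {0<..} s * ennreal (Phi A B \<epsilon> s) \<partial>lborel) =
      (\<integral>\<^sup>+s. ennreal B * indicator {0<..s0} s + ennreal (\<epsilon> / s) * indicator {s0<..<A} s \<partial>lborel)"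
    by (simp add: split)
  also have "\<dots> = (\<integral>\<^sup>+s. ennreal B * indicator {0<..s0} s \<partial>lborel) + (\<integral>\<^sup>+s. ennreal (\<epsilon> / s) * indicator {s0<..<A} s \<partial>lborel)"
    by (rule nn_integral_add) auto
  also have "(\<integral>\<^sup>+s. ennreal B * indicator {0<..s0} s \<partial>lborel) = ennreal \<epsilon>"
    using s0 B Bs0 by (simp add: nn_integral_cmult_indicator ennreal_mult[symmetric])
  also have "(\<integral>\<^sup>+s. ennreal (\<epsilon> / s) * indicator {s0<..<A} s \<partial>lborel) = (\<integral>\<^sup>+s. ennreal (\<epsilon> / s) * indicator {s0..A} s \<partial>lborel)"
  proof (rule nn_integral_cong_AE)
    have "AE s in lborel. s \<noteq> s0" "AE s in lborel. s \<noteq> A" by (rule AE_lborel_singleton)+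
    then show "AE s in lborel. ennreal (\<epsilon> / s) * indicator {s0<..<A} s = ennreal (\<epsilon> / s) * indicator {s0..A} s"
      by eventually_elim (auto simp: indicator_def)
  qed
  also have "\<dots> = ennreal ((\<lambda>s. \<epsilon> * ln s) A - (\<lambda>s. \<epsilon> * ln s) s0)"
  proof (rule nn_integral_FTC_Icc)
    show "(\<lambda>s. \<epsilon> / s) \<in> borel_measurable borel" by measurable
    show "s0 \<le> A" using s0 by simp
    fix x assume x: "x \<in> {s0..A}"
    then have "x > 0" using s0 by auto
    then show "((\<lambda>s. \<epsilon> * ln s) has_real_derivative \<epsilon> / x) (at x)"
      by (auto intro!: derivative_eq_intros simp: field_simps)
    show "0 \<le> \<epsilon> / x" using e \<open>x > 0\<close> by simp
  qed
  also have "ennreal \<epsilon> + ennreal ((\<lambda>s. \<epsilon> * ln s) A - (\<lambda>s. \<epsilon> * ln s) s0) = ennreal (\<epsilon> * (1 + ln (A * B / \<epsilon>)))"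
  proof -
    have lnle: "ln s0 \<le> ln A" using s0 by simp
    have "\<epsilon> * ln A - \<epsilon> * ln s0 \<ge> 0" using lnle e by (simp add: right_diff_distrib[symmetric])
    then have "ennreal \<epsilon> + ennreal (\<epsilon> * ln A - \<epsilon> * ln s0) = ennreal (\<epsilon> + (\<epsilon> * ln A - \<epsilon> * ln s0))"
      using e by (simp add: ennreal_plus)
    also have "\<epsilon> + (\<epsilon> * ln A - \<epsilon> * ln s0) = \<epsilon> * (1 + ln (A * B / \<epsilon>))"
      using A B e by (simp add: s0_def ln_div ln_mult algebra_simps)
    finally show ?thesis by simp
  qed
  finally show ?thesis .
qed


lemma exists_delta:
  fixes a b R1 R2 \<epsilon> :: real and n m :: nat
  assumes "a < R1" "b < R2" "a ^ n * b ^ m < \<epsilon>"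
  shows "\<exists>\<delta>>0. a + \<delta> < R1 \<and> b + \<delta> < R2 \<and> (a + \<delta>) ^ n * (b + \<delta>) ^ m < \<epsilon>"
proof -
  have t1: "((\<lambda>\<delta>. (a + \<delta>) ^ n * (b + \<delta>) ^ m) \<longlongrightarrow> (a + 0) ^ n * (b + 0) ^ m) (at_right 0)"
    by (intro tendsto_intros)
  have t2: "((\<lambda>\<delta>. a + \<delta>) \<longlongrightarrow> a + 0) (at_right 0)" by (intro tendsto_intros)
  have t3: "((\<lambda>\<delta>. b + \<delta>) \<longlongrightarrow> b + 0) (at_right 0)" by (intro tendsto_intros)
  have "eventually (\<lambda>\<delta>. (a + \<delta>) ^ n * (b + \<delta>) ^ m < \<epsilon>) (at_right (0::real))"
    using order_tendstoD(2)[OF t1] assms by simp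
  moreover have "eventually (\<lambda>\<delta>. a + \<delta> < R1) (at_right (0::real))"
    using order_tendstoD(2)[OF t2] assms by simp
  moreover have "eventually (\<lambda>\<delta>. b + \<delta> < R2) (at_right (0::real))"
    using order_tendstoD(2)[OF t3] assms by simp
  ultimately have "eventually (\<lambda>\<delta>. a + \<delta> < R1 \<and> b + \<delta> < R2 \<and> (a + \<delta>) ^ n * (b + \<delta>) ^ m < \<epsilon>) (at_right (0::real))"
    by eventually_elim auto
  then obtain c where c: "c > 0" "\<And>y. y > 0 \<Longrightarrow> y < c \<Longrightarrow> a + y < R1 \<and> b + y < R2 \<and> (a + y) ^ n * (b + y) ^ m < \<epsilon>"
    unfolding eventually_at_right_field by auto
  show ?thesis using c(1) c(2)[of "c/2"] by (intro exI[of _ "c/2"]) auto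
qed

lemma scaled_mink:
  fixes U :: "'a::real_normed_vector set"
  assumes "open U" "balanced U" "U \<noteq> {}" "u \<in> U"
  shows "(\<alpha> = 0 \<and> mink U (\<alpha> *\<^sub>R u) = 0) \<or> (\<alpha> \<noteq> 0 \<and> mink U (\<alpha> *\<^sub>R u) < \<bar>\<alpha>\<bar>)"
proof (cases "\<alpha> = 0")
  case True
  then show ?thesis using mink_zero[OF assms(1-3)] by simp
next
  case False
  have "sgn \<alpha> *\<^sub>R u \<in> U" using assms(2,4) by (rule balanced_scale) (simp add: abs_sgn_eq)
  moreover have "\<alpha> *\<^sub>R u = \<bar>\<alpha>\<bar> *\<^sub>R (sgn \<alpha> *\<^sub>R u)" by (simp add: abs_mult_sgn)
  ultimately have "\<alpha> *\<^sub>R u \<in> (\<lambda>y. \<bar>\<alpha>\<bar> *\<^sub>R y) ` U" by (metis image_eqI)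
  then have "mink U (\<alpha> *\<^sub>R u) < \<bar>\<alpha>\<bar>" using mink_less[OF assms(1-3)] False by simp
  then show ?thesis using False by simp
qed

lemma pow_less_iff:
  fixes a b :: real
  assumes "0 \<le> a" "0 \<le> b" "n > 0"
  shows "a ^ n < b ^ n \<longleftrightarrow> a < b"
  using assms power_strict_mono[of a b n] power_less_imp_less_base[of a n b] by auto

lemma mem_twisted:
  fixes U :: "'a::euclidean_space set" and V :: "'b::euclidean_space set"
  assumes U: "open U" "balanced U" "U \<noteq> {}" and V: "open V" "balanced V" "V \<noteq> {}"
    and R: "R1 > 0" "R2 > 0" "\<epsilon> > 0"
  shows "(x, y) \<in> twisted_prod U R1 R2 \<epsilon> V \<longleftrightarrow>
    mink U x < R1 \<and> mink V y < R2 \<and> mink U x ^ DIM('a) * mink V y ^ DIM('b) < \<epsilon>"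
proof
  assume "(x, y) \<in> twisted_prod U R1 R2 \<epsilon> V"
  then obtain u v \<alpha> \<beta> where uv: "x = \<alpha> *\<^sub>R u" "y = \<beta> *\<^sub>R v" "u \<in> U" "v \<in> V"
    "\<bar>\<alpha>\<bar> \<le> R1" "\<bar>\<beta>\<bar> \<le> R2" "\<bar>\<alpha> ^ DIM('a) * \<beta> ^ DIM('b)\<bar> \<le> \<epsilon>"
    unfolding twisted_prod_def by auto
  have hx: "(\<alpha> = 0 \<and> mink U x = 0) \<or> (\<alpha> \<noteq> 0 \<and> mink U x < \<bar>\<alpha>\<bar>)"
    using scaled_mink[OF U uv(3)] uv(1) by simp
  have hy: "(\<beta> = 0 \<and> mink V y = 0) \<or> (\<beta> \<noteq> 0 \<and> mink V y < \<bar>\<beta>\<bar>)"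
    using scaled_mink[OF V uv(4)] uv(2) by simp
  have nx: "mink U x \<ge> 0" by (rule mink_nonneg[OF U])
  have ny: "mink V y \<ge> 0" by (rule mink_nonneg[OF V])
  have "mink U x < R1" using hx uv(5) R by auto
  moreover have "mink V y < R2" using hy uv(6) R by auto
  moreover have "mink U x ^ DIM('a) * mink V y ^ DIM('b) < \<epsilon>"
  proof (cases "\<alpha> = 0 \<or> \<beta> = 0")
    case True
    then have "mink U x ^ DIM('a) * mink V y ^ DIM('b) = 0" using hx hy by (auto simp: power_0_left)
    then show ?thesis using R by linarith
  next
    case False
    then have lx: "mink U x < \<bar>\<alpha>\<bar>" and ly: "mink V y < \<bar>\<beta>\<bar>" using hx hy by auto
    have "mink U x ^ DIM('a) < \<bar>\<alpha>\<bar> ^ DIM('a)" using lx nx by (simp add: power_strict_mono)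
    moreover have "mink V y ^ DIM('b) < \<bar>\<beta>\<bar> ^ DIM('b)" using ly ny by (simp add: power_strict_mono)
    ultimately have "mink U x ^ DIM('a) * mink V y ^ DIM('b) < \<bar>\<alpha>\<bar> ^ DIM('a) * \<bar>\<beta>\<bar> ^ DIM('b)"
      using nx ny False by (intro mult_strict_mono) auto
    also have "\<dots> = \<bar>\<alpha> ^ DIM('a) * \<beta> ^ DIM('b)\<bar>" by (simp add: abs_mult power_abs)
    finally show ?thesis using uv(7) by linarith
  qed
  ultimately show "mink U x < R1 \<and> mink V y < R2 \<and> mink U x ^ DIM('a) * mink V y ^ DIM('b) < \<epsilon>" by blast
next
  assume h: "mink U x < R1 \<and> mink V y < R2 \<and> mink U x ^ DIM('a) * mink V y ^ DIM('b) < \<epsilon>"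
  have nx: "mink U x \<ge> 0" by (rule mink_nonneg[OF U])
  have ny: "mink V y \<ge> 0" by (rule mink_nonneg[OF V])
  obtain \<delta> where d: "\<delta> > 0" "mink U x + \<delta> < R1" "mink V y + \<delta> < R2"
    "(mink U x + \<delta>) ^ DIM('a) * (mink V y + \<delta>) ^ DIM('b) < \<epsilon>"
    using exists_delta[of "mink U x" R1 "mink V y" R2 "DIM('a)" "DIM('b)" \<epsilon>] h by auto
  define \<alpha> where "\<alpha> = mink U x + \<delta>"
  define \<beta> where "\<beta> = mink V y + \<delta>"
  have a0: "\<alpha> > 0" and b0: "\<beta> > 0" using d nx ny by (auto simp: \<alpha>_def \<beta>_def)
  have "x \<in> (\<lambda>z. \<alpha> *\<^sub>R z) ` U" using mink_less[OF U a0, of x] d(1) by (simp add: \<alpha>_def)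
  then obtain u where u: "u \<in> U" "x = \<alpha> *\<^sub>R u" by auto
  have "y \<in> (\<lambda>z. \<beta> *\<^sub>R z) ` V" using mink_less[OF V b0, of y] d(1) by (simp add: \<beta>_def)
  then obtain v where v: "v \<in> V" "y = \<beta> *\<^sub>R v" by auto
  have "\<bar>\<alpha>\<bar> \<le> R1" "\<bar>\<beta>\<bar> \<le> R2" using a0 b0 d by (auto simp: \<alpha>_def \<beta>_def)
  moreover have "\<bar>\<alpha> ^ DIM('a) * \<beta> ^ DIM('b)\<bar> \<le> \<epsilon>"
    using a0 b0 d(4) by (simp add: \<alpha>_def \<beta>_def abs_mult)
  ultimately show "(x, y) \<in> twisted_prod U R1 R2 \<epsilon> V"
    unfolding twisted_prod_def using u v by blast
qed


lemma level_measure: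
  fixes U :: "'a::euclidean_space set"
  assumes U: "open U" "balanced U" "U \<noteq> {}" and s: "s > 0"
  shows "emeasure lborel {x. mink U x ^ DIM('a) < s} = ennreal s * emeasure lborel U"
proof -
  let ?r = "root DIM('a) s"
  have r: "?r > 0" using s by simp
  have "{x. mink U x ^ DIM('a) < s} = {x. mink U x < ?r}"
  proof -
    have "mink U x ^ DIM('a) < s \<longleftrightarrow> mink U x < ?r" for x
    proof -
      have n: "mink U x \<ge> 0" by (rule mink_nonneg[OF U])
      have "mink U x ^ DIM('a) < s \<longleftrightarrow> mink U x ^ DIM('a) < ?r ^ DIM('a)"
        using s by (simp add: real_root_pow_pos2)
      also have "\<dots> \<longleftrightarrow> mink U x < ?r" using n r by (intro pow_less_iff) auto
      finally show ?thesis .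
    qed
    then show ?thesis by simp
  qed
  also have "\<dots> = (\<lambda>y. ?r *\<^sub>R y) ` U" using mink_less[OF U r] by auto
  finally have eq: "{x. mink U x ^ DIM('a) < s} = (\<lambda>y. ?r *\<^sub>R y) ` U" .
  have "emeasure lborel ((\<lambda>y. ?r *\<^sub>R y) ` U) = ennreal (\<bar>?r\<bar> ^ DIM('a)) * emeasure lborel U"
    using r U(1) by (intro emeasure_scale) auto
  also have "\<bar>?r\<bar> ^ DIM('a) = s" using r s by (simp add: real_root_pow_pos2)
  finally show ?thesis unfolding eq .
qed

theorem mainTheorem6:
  fixes U :: "'a::euclidean_space set" and V :: "'b::euclidean_space set"
    and R1 R2 \<epsilon> :: real
  assumes "open U" "compact (closure U)" "balanced U"
    and "open V" "compact (closure V)" "balanced V"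
    and "R1 > 0" "R2 > 0" "0 < \<epsilon>" "\<epsilon> < R1 ^ DIM('a) * R2 ^ DIM('b)"
  shows "emeasure lborel (twisted_prod U R1 R2 \<epsilon> V) =
    ennreal (\<epsilon> * (1 + ln (R1 ^ DIM('a) * R2 ^ DIM('b) / \<epsilon>))) * emeasure lborel U * emeasure lborel V"
proof (cases "U = {} \<or> V = {}")
  case True
  then have "twisted_prod U R1 R2 \<epsilon> V = {}" unfolding twisted_prod_def by auto
  then show ?thesis using True by auto
next
  case False
  then have Une: "U \<noteq> {}" and Vne: "V \<noteq> {}" by auto
  note U = assms(1) assms(3) Une
  note V = assms(4) assms(6) Vne
  define A where "A = R1 ^ DIM('a)"
  define B where "B = R2 ^ DIM('b)"
  define q1 where "q1 x = mink U x ^ DIM('a)" for x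
  define q2 where "q2 y = mink V y ^ DIM('b)" for y
  define c1 where "c1 = measure lborel U"
  define c2 where "c2 = measure lborel V"
  have A: "A > 0" and B: "B > 0" using assms by (auto simp: A_def B_def)
  have eAB: "\<epsilon> < A * B" using assms by (simp add: A_def B_def)
  have q1m[measurable]: "q1 \<in> borel_measurable borel"
    unfolding q1_def using mink_measurable[OF U] by measurable
  have q2m[measurable]: "q2 \<in> borel_measurable borel"
    unfolding q2_def using mink_measurable[OF V] by measurable
  have q1n: "\<And>x. 0 \<le> q1 x" using mink_nonneg[OF U] by (simp add: q1_def)
  have q2n: "\<And>y. 0 \<le> q2 y" using mink_nonneg[OF V] by (simp add: q2_def)
  have bU: "bounded U" using assms(2) compact_imp_bounded bounded_subset closure_subset by blast
  have bV: "bounded V" using assms(5) compact_imp_bounded bounded_subset closure_subset by blast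
  have eU: "emeasure lborel U = ennreal c1"
    unfolding c1_def using emeasure_bounded_finite[OF bU] by (intro emeasure_eq_ennreal_measure) auto
  have eV: "emeasure lborel V = ennreal c2"
    unfolding c2_def using emeasure_bounded_finite[OF bV] by (intro emeasure_eq_ennreal_measure) auto
  have c1: "c1 \<ge> 0" and c2: "c2 \<ge> 0" by (auto simp: c1_def c2_def)
  have lev1: "emeasure lborel {x. q1 x < s} = ennreal (s * c1)" if "s > 0" for s
    using level_measure[OF U that] eU that c1 by (simp add: q1_def ennreal_mult)
  have lev2: "emeasure lborel {y. q2 y < s} = ennreal (s * c2)" if "s > 0" for s
    using level_measure[OF V that] eV that c2 by (simp add: q2_def ennreal_mult)
  let ?T = "twisted_prod U R1 R2 \<epsilon> V"
  have Teq: "?T = {z. q1 (fst z) < A \<and> q2 (snd z) < B \<and> q1 (fst z) * q2 (snd z) < \<epsilon>}"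
  proof (intro set_eqI)
    fix z :: "'a \<times> 'b"
    obtain x y where z: "z = (x, y)" by (cases z)
    have "mink U x < R1 \<longleftrightarrow> q1 x < A"
      unfolding q1_def A_def using mink_nonneg[OF U, of x] assms(7)
      by (intro pow_less_iff[symmetric]) auto
    moreover have "mink V y < R2 \<longleftrightarrow> q2 y < B"
      unfolding q2_def B_def using mink_nonneg[OF V, of y] assms(8)
      by (intro pow_less_iff[symmetric]) auto
    ultimately show "z \<in> ?T \<longleftrightarrow> z \<in> {z. q1 (fst z) < A \<and> q2 (snd z) < B \<and> q1 (fst z) * q2 (snd z) < \<epsilon>}"
      unfolding z using mem_twisted[OF U V assms(7,8,9), of x y] by (simp add: q1_def q2_def)
  qed
  have Tm: "?T \<in> sets (lborel \<Otimes>\<^sub>M lborel)"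
  proof -
    have f1: "(\<lambda>z. q1 (fst z)) \<in> borel_measurable (lborel \<Otimes>\<^sub>M lborel)"
      using q1m by (intro measurable_compose[OF measurable_fst]) simp
    have f2: "(\<lambda>z. q2 (snd z)) \<in> borel_measurable (lborel \<Otimes>\<^sub>M lborel)"
      using q2m by (intro measurable_compose[OF measurable_snd]) simp
    have "{z \<in> space (lborel \<Otimes>\<^sub>M lborel). q1 (fst z) < A \<and> q2 (snd z) < B \<and> q1 (fst z) * q2 (snd z) < \<epsilon>} \<in> sets (lborel \<Otimes>\<^sub>M lborel)"
      using f1 f2 by measurable
    then show ?thesis unfolding Teq by (simp add: space_pair_measure)
  qed
  have "emeasure lborel ?T = emeasure (lborel \<Otimes>\<^sub>M lborel) ?T" by (simp add: lborel_prod)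
  also have "\<dots> = (\<integral>\<^sup>+x. emeasure lborel (Pair x -` ?T) \<partial>lborel)"
    by (rule lborel.emeasure_pair_measure_alt[OF Tm])
  also have "\<dots> = (\<integral>\<^sup>+x. ennreal c2 * ennreal (Phi A B \<epsilon> (q1 x)) \<partial>lborel)"
  proof (rule nn_integral_cong)
    fix x :: 'a
    define s where "s = q1 x"
    have "Pair x -` ?T = {y. q2 y \<in> {t. s < A \<and> t < B \<and> s * t < \<epsilon>}}" unfolding Teq s_def by auto
    then have "emeasure lborel (Pair x -` ?T) = (\<integral>\<^sup>+y. indicator {t. s < A \<and> t < B \<and> s * t < \<epsilon>} (q2 y) \<partial>lborel)"
      by (simp add: nn_integral_indicator[symmetric] indicator_def)
    also have "\<dots> = ennreal c2 * (\<integral>\<^sup>+t. indicator {0<..} t * indicator {t. s < A \<and> t < B \<and> s * t < \<epsilon>} t \<partial>lborel)"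
      by (rule distr_lemma[OF q2m q2n lev2 c2]) measurable
    also have "(\<integral>\<^sup>+t. indicator {0<..} t * indicator {t. s < A \<and> t < B \<and> s * t < \<epsilon>} t \<partial>lborel) =
        (\<integral>\<^sup>+t. indicator {t. 0 < t \<and> s < A \<and> t < B \<and> s * t < \<epsilon>} t \<partial>lborel)"
      by (intro nn_integral_cong) (auto simp: indicator_def)
    also have "\<dots> = emeasure lborel {t. 0 < t \<and> s < A \<and> t < B \<and> s * t < \<epsilon>}"
      by (rule nn_integral_indicator) measurable
    also have "\<dots> = ennreal (Phi A B \<epsilon> s)" using inner_calc[OF A B assms(9)] by simp
    finally show "emeasure lborel (Pair x -` ?T) = ennreal c2 * ennreal (Phi A B \<epsilon> (q1 x))"
      by (simp add: s_def)
  qed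
  also have "\<dots> = ennreal c1 * (\<integral>\<^sup>+s. indicator {0<..} s * (ennreal c2 * ennreal (Phi A B \<epsilon> s)) \<partial>lborel)"
  proof (rule distr_lemma[OF q1m q1n lev1 c1])
    have "(\<lambda>s. Phi A B \<epsilon> s) \<in> borel_measurable borel" unfolding Phi_def by measurable
    then show "(\<lambda>s. ennreal c2 * ennreal (Phi A B \<epsilon> s)) \<in> borel_measurable borel" by measurable
  qed
  also have "(\<integral>\<^sup>+s. indicator {0<..} s * (ennreal c2 * ennreal (Phi A B \<epsilon> s)) \<partial>lborel) =
      ennreal c2 * (\<integral>\<^sup>+s. indicator {0<..} s * ennreal (Phi A B \<epsilon> s) \<partial>lborel)"
  proof -
    have "(\<lambda>s. Phi A B \<epsilon> s) \<in> borel_measurable borel" unfolding Phi_def by measurable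
    then show ?thesis
      by (subst nn_integral_cmult[symmetric]) (auto simp: ac_simps)
  qed
  also have "(\<integral>\<^sup>+s. indicator {0<..} s * ennreal (Phi A B \<epsilon> s) \<partial>lborel) = ennreal (\<epsilon> * (1 + ln (A * B / \<epsilon>)))"
    by (rule outer_calc[OF A B assms(9) eAB])
  finally show ?thesis unfolding eU eV A_def B_def by (simp add: ac_simps)
qed

end
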